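(* Let $X$ be a real Hilbert space and let $T_1,T_2,T_3\colon X\to X$ be $\sigma_1$-, $\sigma_2$-, and $\sigma_3$-cocoercive, respectively. Let $\eta,\nu,\lambda,\delta>0$, set $S:=-\nu\mathrm{Id}+\lambda T_1-\delta T_3T_1$ and $$T:=\mathrm{Id}-\eta T_1+\eta T_2 S.$$ (i) If $\lambda=2\nu\sigma_1=2\sigma_2$ and $\eta^*:=\frac{1}{\nu}\big(\lambda-\frac{\delta}{2\sigma_3}\big)>0$, then for all $x,y\in X$, $$\|Tx-Ty\|^2\le\|x-y\|^2-\Big(\frac{\eta^*}{\eta}-1\Big)\|(\mathrm{Id}-T)x-(\mathrm{Id}-T)y\|^2-\frac{\delta}{2\eta\nu\sigma_3}\|(\mathrm{Id}-T)x-(\mathrm{Id}-T)y-2\eta\sigma_3(T_3T_1x-T_3T_1y)\|^2.$$ (ii) If $\lambda<\nu\sigma_1+\sigma_2$ and $$\eta^*:=\frac{1}{\nu}\Big(\frac{(2\nu\sigma_1-\lambda)(2\sigma_2-\lambda)}{2(\nu\sigma_1+\sigma_2-\lambda)}+\lambda-\frac{\delta}{2\sigma_3}\Big)>0,$$ then for all $x,y\in X$, $$\|Tx-Ty\|^2\le\|x-y\|^2-\Big(\frac{\eta^*}{\eta}-1\Big)\|(\mathrm{Id}-T)x-(\mathrm{Id}-T)y\|^2-\frac{\delta}{2\eta\nu\sigma_3}\|(\mathrm{Id}-T)x-(\mathrm{Id}-T)y-2\eta\sigma_3(T_3T_1x-T_3T_1y)\|^2$$ $$\qquad-\frac{\eta}{2\nu(\nu\sigma_1+\sigma_2-\lambda)}\|(2\nu\sigma_1-\lambda)(T_1x-T_1y)+(2\sigma_2-\lambda)(T_2Sx-T_2Sy)\|^2.$$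 In both cases, $T$ is conically $\frac{\eta}{\eta^*}$-averaged.
   Context: An operator $T\colon X\to X$ is $\sigma$-cocoercive ($\sigma>0$) if $\langle x-y,Tx-Ty\rangle\ge\sigma\|Tx-Ty\|^2$ for all $x,y$. An operator $T\colon X\to X$ is conically $\theta$-averaged ($\theta>0$) if $T=(1-\theta)\mathrm{Id}+\theta N$ for some nonexpansive (1-Lipschitz) $N\colon X\to X$. *)

theory Defs
  imports "HOL-Analysis.Analysis"
begin

definition cocoercive :: "real \<Rightarrow> ('a::real_inner \<Rightarrow> 'a) \<Rightarrow> bool" where
  "cocoercive \<sigma> T \<longleftrightarrow> \<sigma> > 0 \<and>
     (\<forall>x y. inner (x - y) (T x - T y) \<ge> \<sigma> * (norm (T x - T y))\<^sup>2)"

definition nonexpansive :: "('a::real_normed_vector \<Rightarrow> 'a) \<Rightarrow> bool" where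
  "nonexpansive N \<longleftrightarrow> (\<forall>x y. norm (N x - N y) \<le> norm (x - y))"

definition conically_averaged :: "real \<Rightarrow> ('a::real_normed_vector \<Rightarrow> 'a) \<Rightarrow> bool" where
  "conically_averaged \<theta> T \<longleftrightarrow> \<theta> > 0 \<and>
     (\<exists>N. nonexpansive N \<and> T = (\<lambda>x. (1 - \<theta>) *\<^sub>R x + \<theta> *\<^sub>R N x))"

end

theory Submission
  imports Defs
begin

lemma real_ii:
  fixes AA A1 A2 P11 P22 P33 P12 P13 P23 \<sigma>1 \<sigma>2 \<sigma>3 \<eta> \<nu> lam \<delta> es :: real
  assumes "\<eta> > 0" "\<nu> > 0" "\<sigma>3 > 0" "\<nu>*\<sigma>1+\<sigma>2-lam > 0"
  and es: "es = (1 / \<nu>) * ((2 * \<nu> * \<sigma>1 - lam) * (2 * \<sigma>2 - lam) / (2 * (\<nu> * \<sigma>1 + \<sigma>2 - lam))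
                + lam - \<delta> / (2 * \<sigma>3))"
  and s1: "A1 - \<sigma>1*P11 \<ge> 0" and s2: "-\<nu>*A2 + lam*P12 - \<delta>*P23 - \<sigma>2*P22 \<ge> 0"
  and s3: "P13 - \<sigma>3*P33 \<ge> 0" and d: "\<delta> > 0"
  shows "AA - 2*\<eta>*(A1-A2) + \<eta>^2*(P11 - 2*P12 + P22) \<le> AA
     - (es/\<eta> - 1) * (\<eta>^2*(P11 - 2*P12 + P22))
     - \<delta> / (2 * \<eta> * \<nu> * \<sigma>3) * (\<eta>^2*(P11 - 2*P12 + P22) - 4*\<eta>^2*\<sigma>3*(P13-P23) + 4*\<eta>^2*\<sigma>3^2*P33)
     - \<eta> / (2 * \<nu> * (\<nu> * \<sigma>1 + \<sigma>2 - lam)) *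
        ((2*\<nu>*\<sigma>1-lam)^2*P11 + 2*(2*\<nu>*\<sigma>1-lam)*(2*\<sigma>2-lam)*P12 + (2*\<sigma>2-lam)^2*P22)"
proof -
  let ?s1 = "A1 - \<sigma>1*P11" and ?s2 = "-\<nu>*A2 + lam*P12 - \<delta>*P23 - \<sigma>2*P22" and ?s3 = "P13 - \<sigma>3*P33"
  have id: "(AA
     - (es/\<eta> - 1) * (\<eta>^2*(P11 - 2*P12 + P22))
     - \<delta> / (2 * \<eta> * \<nu> * \<sigma>3) * (\<eta>^2*(P11 - 2*P12 + P22) - 4*\<eta>^2*\<sigma>3*(P13-P23) + 4*\<eta>^2*\<sigma>3^2*P33)
     - \<eta> / (2 * \<nu> * (\<nu> * \<sigma>1 + \<sigma>2 - lam)) *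
        ((2*\<nu>*\<sigma>1-lam)^2*P11 + 2*(2*\<nu>*\<sigma>1-lam)*(2*\<sigma>2-lam)*P12 + (2*\<sigma>2-lam)^2*P22))
     - (AA - 2*\<eta>*(A1-A2) + \<eta>^2*(P11 - 2*P12 + P22)) = 2*\<eta>/\<nu>*(\<nu>*?s1 + ?s2 + \<delta>*?s3)"
  proof -
    define k where "k = \<nu>*\<sigma>1+\<sigma>2-lam"
    have k0: "k \<noteq> 0" using assms(4) k_def by simp
    have s2e: "\<sigma>2 = k + lam - \<nu>*\<sigma>1" using k_def by simp
    show ?thesis unfolding es k_def[symmetric] unfolding s2e
      using assms(1-3) k0 by (simp add: field_simps power2_eq_square)
  qed
  have "2*\<eta>/\<nu>*(\<nu>*?s1 + ?s2 + \<delta>*?s3) \<ge> 0"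
    using assms by (intro mult_nonneg_nonneg add_nonneg_nonneg) auto
  then show ?thesis using id by linarith
qed

lemma real_i:
  fixes AA A1 A2 P11 P22 P33 P12 P13 P23 \<sigma>1 \<sigma>2 \<sigma>3 \<eta> \<nu> lam \<delta> es :: real
  assumes "\<eta> > 0" "\<nu> > 0" "\<sigma>3 > 0" "lam = 2*\<nu>*\<sigma>1" "lam = 2*\<sigma>2"
  and es: "es = (1 / \<nu>) * (lam - \<delta> / (2 * \<sigma>3))"
  and s1: "A1 - \<sigma>1*P11 \<ge> 0" and s2: "-\<nu>*A2 + lam*P12 - \<delta>*P23 - \<sigma>2*P22 \<ge> 0"
  and s3: "P13 - \<sigma>3*P33 \<ge> 0" and d: "\<delta> > 0"
  shows "AA - 2*\<eta>*(A1-A2) + \<eta>^2*(P11 - 2*P12 + P22) \<le> AA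
     - (es/\<eta> - 1) * (\<eta>^2*(P11 - 2*P12 + P22))
     - \<delta> / (2 * \<eta> * \<nu> * \<sigma>3) * (\<eta>^2*(P11 - 2*P12 + P22) - 4*\<eta>^2*\<sigma>3*(P13-P23) + 4*\<eta>^2*\<sigma>3^2*P33)"
proof -
  let ?s1 = "A1 - \<sigma>1*P11" and ?s2 = "-\<nu>*A2 + lam*P12 - \<delta>*P23 - \<sigma>2*P22" and ?s3 = "P13 - \<sigma>3*P33"
  have e1: "\<sigma>1 = lam/(2*\<nu>)" "\<sigma>2 = lam/2" using assms by auto
  have id: "(AA
     - (es/\<eta> - 1) * (\<eta>^2*(P11 - 2*P12 + P22))
     - \<delta> / (2 * \<eta> * \<nu> * \<sigma>3) * (\<eta>^2*(P11 - 2*P12 + P22) - 4*\<eta>^2*\<sigma>3*(P13-P23) + 4*\<eta>^2*\<sigma>3^2*P33))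
     - (AA - 2*\<eta>*(A1-A2) + \<eta>^2*(P11 - 2*P12 + P22)) = 2*\<eta>/\<nu>*(\<nu>*?s1 + ?s2 + \<delta>*?s3)"
    using assms(1-5) unfolding es by (simp add: field_simps power2_eq_square)
  have "2*\<eta>/\<nu>*(\<nu>*?s1 + ?s2 + \<delta>*?s3) \<ge> 0"
    using assms by (intro mult_nonneg_nonneg add_nonneg_nonneg) auto
  then show ?thesis using id by linarith
qed

lemma nsq: "(norm (v::'a::real_inner))^2 = inner v v"
  by (simp add: power2_norm_eq_inner)

lemma vec_facts:
  fixes a t1 t2 t3 :: "'a::real_inner" and \<eta> \<sigma>3 p q :: real
  shows "(norm (a - \<eta> *\<^sub>R (t1 - t2)))^2 = inner a a - 2*\<eta>*(inner a t1 - inner a t2)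
            + \<eta>^2*(inner t1 t1 - 2*inner t1 t2 + inner t2 t2)"
    and "(norm (\<eta> *\<^sub>R (t1 - t2) - (2*\<eta>*\<sigma>3) *\<^sub>R t3))^2 = \<eta>^2*(inner t1 t1 - 2*inner t1 t2 + inner t2 t2)
            - 4*\<eta>^2*\<sigma>3*(inner t1 t3 - inner t2 t3) + 4*\<eta>^2*\<sigma>3^2*inner t3 t3"
    and "(norm (p *\<^sub>R t1 + q *\<^sub>R t2))^2 = p^2 * inner t1 t1 + 2*p*q*inner t1 t2 + q^2*inner t2 t2"
    and "(norm (\<eta> *\<^sub>R (t1 - t2)))^2 = \<eta>^2*(inner t1 t1 - 2*inner t1 t2 + inner t2 t2)"
  unfolding nsq by (simp_all add: inner_diff_left inner_diff_right inner_add_left inner_add_right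
      inner_commute[of t2 t1] inner_commute[of t3 t1] inner_commute[of t3 t2] inner_commute[of t1 a] inner_commute[of t2 a]
      algebra_simps power2_eq_square)

lemma inner_lin3:
  fixes a t1 t2 t3 :: "'a::real_inner"
  shows "inner (- \<nu> *\<^sub>R a + l *\<^sub>R t1 - d *\<^sub>R t3) t2 = -\<nu> * inner a t2 + l * inner t1 t2 - d * inner t2 t3"
  by (simp add: inner_diff_left inner_add_left inner_commute[of t3 t2])

lemma conic_from_ineq:
  fixes T :: "'a::real_inner \<Rightarrow> 'a" and \<theta> :: real and R :: "'a \<Rightarrow> 'a \<Rightarrow> real"
  assumes th: "\<theta> > 0"
    and H: "\<And>x y. (norm (T x - T y))\<^sup>2 \<le> (norm (x - y))\<^sup>2 - (1/\<theta> - 1) * (norm ((x - T x) - (y - T y)))\<^sup>2 - R x y"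
    and R: "\<And>x y. R x y \<ge> 0"
  shows "conically_averaged \<theta> T"
proof -
  define N where "N = (\<lambda>x. x - (1/\<theta>) *\<^sub>R (x - T x))"
  have "nonexpansive N"
    unfolding nonexpansive_def
  proof (intro allI)
    fix x y :: 'a
    define a where "a = x - y"
    define u where "u = (x - T x) - (y - T y)"
    have e1: "T x - T y = a - u" unfolding a_def u_def by (simp add: algebra_simps)
    have e2: "N x - N y = a - (1/\<theta>) *\<^sub>R u" unfolding N_def a_def u_def by (simp add: scaleR_diff_right)
    have h: "inner (a-u) (a-u) \<le> inner a a - (1/\<theta> - 1) * inner u u"
      using H[of x y] R[of x y] unfolding e1 nsq a_def[symmetric] u_def[symmetric] by linarith
    have h2: "(1/\<theta>) * inner u u \<le> 2 * inner a u"
      using h by (simp add: inner_diff_left inner_diff_right inner_commute[of u a] algebra_simps)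
    have "inner (N x - N y) (N x - N y) = inner a a - (1/\<theta>) * (2 * inner a u - (1/\<theta>) * inner u u)"
      unfolding e2 by (simp add: inner_diff_left inner_diff_right inner_commute[of u a] algebra_simps)
    also have "\<dots> \<le> inner a a" using h2 th by simp
    finally have "(norm (N x - N y))^2 \<le> (norm (x-y))^2" unfolding nsq a_def .
    then show "norm (N x - N y) \<le> norm (x - y)" by (rule power2_le_imp_le) simp
  qed
  moreover have Teq: "T = (\<lambda>x. (1 - \<theta>) *\<^sub>R x + \<theta> *\<^sub>R N x)"
  proof
    fix x show "T x = (1 - \<theta>) *\<^sub>R x + \<theta> *\<^sub>R N x"
    proof -
      have "\<theta> *\<^sub>R N x = \<theta> *\<^sub>R x - (x - T x)"
        using th by (simp add: N_def scaleR_diff_right)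
      then show ?thesis by (simp add: scaleR_diff_left)
    qed
  qed
  ultimately have "\<exists>N. nonexpansive N \<and> T = (\<lambda>x. (1 - \<theta>) *\<^sub>R x + \<theta> *\<^sub>R N x)"
    by (intro exI[where x=N] conjI)
  then show ?thesis unfolding conically_averaged_def using th by simp
qed

lemma conic1:
  fixes T :: "'a::real_inner \<Rightarrow> 'a" and e s :: real and R :: "'a \<Rightarrow> 'a \<Rightarrow> real"
  assumes e: "e > 0" and s: "s > 0"
    and H: "\<And>x y. (norm (T x - T y))\<^sup>2 \<le> (norm (x - y))\<^sup>2 - (s/e - 1) * (norm ((x - T x) - (y - T y)))\<^sup>2 - R x y"
    and R: "\<And>x y. R x y \<ge> 0"
  shows "conically_averaged (e/s) T"
proof (rule conic_from_ineq[where R=R])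
  show "0 < e/s" using e s by simp
  show "(norm (T x - T y))\<^sup>2 \<le> (norm (x - y))\<^sup>2 - (1/(e/s) - 1) * (norm ((x - T x) - (y - T y)))\<^sup>2 - R x y" for x y
    using H[of x y] by simp
  show "R x y \<ge> 0" for x y by (rule R)
qed

lemma conic2:
  fixes T :: "'a::real_inner \<Rightarrow> 'a" and e s :: real and Ra Rb :: "'a \<Rightarrow> 'a \<Rightarrow> real"
  assumes e: "e > 0" and s: "s > 0"
    and H: "\<And>x y. (norm (T x - T y))\<^sup>2 \<le> (norm (x - y))\<^sup>2 - (s/e - 1) * (norm ((x - T x) - (y - T y)))\<^sup>2 - Ra x y - Rb x y"
    and Ra: "\<And>x y. Ra x y \<ge> 0" and Rb: "\<And>x y. Rb x y \<ge> 0"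
  shows "conically_averaged (e/s) T"
proof (rule conic1[where R="\<lambda>x y. Ra x y + Rb x y", OF e s])
  show "(norm (T x - T y))\<^sup>2 \<le> (norm (x - y))\<^sup>2 - (s/e - 1) * (norm ((x - T x) - (y - T y)))\<^sup>2 - (Ra x y + Rb x y)" for x y
    using H[of x y] by simp
  show "Ra x y + Rb x y \<ge> 0" for x y using Ra[of x y] Rb[of x y] by simp
qed

theorem proposition3p2:
  fixes T1 T2 T3 S T :: "'a::{real_inner, complete_space} \<Rightarrow> 'a"
    and \<sigma>1 \<sigma>2 \<sigma>3 \<eta> \<nu> lam \<delta> :: real
  assumes c1: "cocoercive \<sigma>1 T1" and c2: "cocoercive \<sigma>2 T2" and c3: "cocoercive \<sigma>3 T3"
    and pos: "\<eta> > 0" "\<nu> > 0" "lam > 0" "\<delta> > 0"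
    and S_def: "S = (\<lambda>x. - (\<nu> *\<^sub>R x) + lam *\<^sub>R T1 x - \<delta> *\<^sub>R T3 (T1 x))"
    and T_def: "T = (\<lambda>x. x - \<eta> *\<^sub>R T1 x + \<eta> *\<^sub>R T2 (S x))"
  shows
   "(let \<eta>s = (1 / \<nu>) * (lam - \<delta> / (2 * \<sigma>3)) in
      (lam = 2 * \<nu> * \<sigma>1 \<and> lam = 2 * \<sigma>2 \<and> \<eta>s > 0) \<longrightarrow>
      ((\<forall>x y. (norm (T x - T y))\<^sup>2 \<le> (norm (x - y))\<^sup>2
          - (\<eta>s / \<eta> - 1) * (norm ((x - T x) - (y - T y)))\<^sup>2
          - \<delta> / (2 * \<eta> * \<nu> * \<sigma>3) *
              (norm ((x - T x) - (y - T y) - (2 * \<eta> * \<sigma>3) *\<^sub>R (T3 (T1 x) - T3 (T1 y))))\<^sup>2)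
       \<and> conically_averaged (\<eta> / \<eta>s) T))
   \<and>
   (let \<eta>s = (1 / \<nu>) * ((2 * \<nu> * \<sigma>1 - lam) * (2 * \<sigma>2 - lam) / (2 * (\<nu> * \<sigma>1 + \<sigma>2 - lam))
                + lam - \<delta> / (2 * \<sigma>3)) in
      (lam < \<nu> * \<sigma>1 + \<sigma>2 \<and> \<eta>s > 0) \<longrightarrow>
      ((\<forall>x y. (norm (T x - T y))\<^sup>2 \<le> (norm (x - y))\<^sup>2
          - (\<eta>s / \<eta> - 1) * (norm ((x - T x) - (y - T y)))\<^sup>2
          - \<delta> / (2 * \<eta> * \<nu> * \<sigma>3) *
              (norm ((x - T x) - (y - T y) - (2 * \<eta> * \<sigma>3) *\<^sub>R (T3 (T1 x) - T3 (T1 y))))\<^sup>2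
          - \<eta> / (2 * \<nu> * (\<nu> * \<sigma>1 + \<sigma>2 - lam)) *
              (norm ((2 * \<nu> * \<sigma>1 - lam) *\<^sub>R (T1 x - T1 y) + (2 * \<sigma>2 - lam) *\<^sub>R (T2 (S x) - T2 (S y))))\<^sup>2)
       \<and> conically_averaged (\<eta> / \<eta>s) T))"
  
proof -
  have s1p: "\<sigma>3 > 0" using c3 unfolding cocoercive_def by simp
  have key: "\<And>x y. (x - T x) - (y - T y) = \<eta> *\<^sub>R (T1 x - T1 y - (T2 (S x) - T2 (S y)))
     \<and> T x - T y = (x - y) - \<eta> *\<^sub>R (T1 x - T1 y - (T2 (S x) - T2 (S y)))
     \<and> inner (x-y) (T1 x - T1 y) - \<sigma>1 * inner (T1 x - T1 y) (T1 x - T1 y) \<ge> 0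
     \<and> -\<nu> * inner (x-y) (T2 (S x) - T2 (S y)) + lam * inner (T1 x - T1 y) (T2 (S x) - T2 (S y))
        - \<delta> * inner (T2 (S x) - T2 (S y)) (T3 (T1 x) - T3 (T1 y)) - \<sigma>2 * inner (T2 (S x) - T2 (S y)) (T2 (S x) - T2 (S y)) \<ge> 0
     \<and> inner (T1 x - T1 y) (T3 (T1 x) - T3 (T1 y)) - \<sigma>3 * inner (T3 (T1 x) - T3 (T1 y)) (T3 (T1 x) - T3 (T1 y)) \<ge> 0"
  proof -
    fix x y
    have a: "(x - T x) - (y - T y) = \<eta> *\<^sub>R (T1 x - T1 y - (T2 (S x) - T2 (S y)))"
      unfolding T_def by (simp add: algebra_simps)
    have b: "T x - T y = (x - y) - \<eta> *\<^sub>R (T1 x - T1 y - (T2 (S x) - T2 (S y)))"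
      unfolding T_def by (simp add: algebra_simps)
    have c: "inner (x-y) (T1 x - T1 y) - \<sigma>1 * inner (T1 x - T1 y) (T1 x - T1 y) \<ge> 0"
      using c1 unfolding cocoercive_def nsq by (auto simp: algebra_simps)
    have sd: "S x - S y = - \<nu> *\<^sub>R (x - y) + lam *\<^sub>R (T1 x - T1 y) - \<delta> *\<^sub>R (T3 (T1 x) - T3 (T1 y))"
      unfolding S_def by (simp add: algebra_simps)
    have d0: "inner (S x - S y) (T2 (S x) - T2 (S y)) \<ge> \<sigma>2 * inner (T2 (S x) - T2 (S y)) (T2 (S x) - T2 (S y))"
      using c2 unfolding cocoercive_def nsq by blast
    have d: "-\<nu> * inner (x-y) (T2 (S x) - T2 (S y)) + lam * inner (T1 x - T1 y) (T2 (S x) - T2 (S y))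
        - \<delta> * inner (T2 (S x) - T2 (S y)) (T3 (T1 x) - T3 (T1 y)) - \<sigma>2 * inner (T2 (S x) - T2 (S y)) (T2 (S x) - T2 (S y)) \<ge> 0"
      using d0 unfolding sd inner_lin3 by simp
    have e: "inner (T1 x - T1 y) (T3 (T1 x) - T3 (T1 y)) - \<sigma>3 * inner (T3 (T1 x) - T3 (T1 y)) (T3 (T1 x) - T3 (T1 y)) \<ge> 0"
      using c3 unfolding cocoercive_def nsq by (auto simp: algebra_simps)
    show "?thesis x y" using a b c d e by blast
  qed
  show ?thesis
  proof (intro conjI)
    show "let \<eta>s = (1 / \<nu>) * (lam - \<delta> / (2 * \<sigma>3)) in
      (lam = 2 * \<nu> * \<sigma>1 \<and> lam = 2 * \<sigma>2 \<and> \<eta>s > 0) \<longrightarrow>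
      ((\<forall>x y. (norm (T x - T y))\<^sup>2 \<le> (norm (x - y))\<^sup>2
          - (\<eta>s / \<eta> - 1) * (norm ((x - T x) - (y - T y)))\<^sup>2
          - \<delta> / (2 * \<eta> * \<nu> * \<sigma>3) *
              (norm ((x - T x) - (y - T y) - (2 * \<eta> * \<sigma>3) *\<^sub>R (T3 (T1 x) - T3 (T1 y))))\<^sup>2)
       \<and> conically_averaged (\<eta> / \<eta>s) T)"
      unfolding Let_def
    proof (intro impI)
      define es where "es = (1 / \<nu>) * (lam - \<delta> / (2 * \<sigma>3))"
      assume h: "lam = 2 * \<nu> * \<sigma>1 \<and> lam = 2 * \<sigma>2 \<and> (1 / \<nu>) * (lam - \<delta> / (2 * \<sigma>3)) > 0"
      have es0: "es > 0" using h unfolding es_def by blast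
      have I: "(norm (T x - T y))\<^sup>2 \<le> (norm (x - y))\<^sup>2
          - (es / \<eta> - 1) * (norm ((x - T x) - (y - T y)))\<^sup>2
          - \<delta> / (2 * \<eta> * \<nu> * \<sigma>3) *
              (norm ((x - T x) - (y - T y) - (2 * \<eta> * \<sigma>3) *\<^sub>R (T3 (T1 x) - T3 (T1 y))))\<^sup>2" for x y
      proof -
        from key[of x y] have k: "(x - T x) - (y - T y) = \<eta> *\<^sub>R (T1 x - T1 y - (T2 (S x) - T2 (S y)))"
          "T x - T y = (x - y) - \<eta> *\<^sub>R (T1 x - T1 y - (T2 (S x) - T2 (S y)))" and ks: "inner (x-y) (T1 x - T1 y) - \<sigma>1 * inner (T1 x - T1 y) (T1 x - T1 y) \<ge> 0"
     "-\<nu> * inner (x-y) (T2 (S x) - T2 (S y)) + lam * inner (T1 x - T1 y) (T2 (S x) - T2 (S y))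
        - \<delta> * inner (T2 (S x) - T2 (S y)) (T3 (T1 x) - T3 (T1 y)) - \<sigma>2 * inner (T2 (S x) - T2 (S y)) (T2 (S x) - T2 (S y)) \<ge> 0"
     "inner (T1 x - T1 y) (T3 (T1 x) - T3 (T1 y)) - \<sigma>3 * inner (T3 (T1 x) - T3 (T1 y)) (T3 (T1 x) - T3 (T1 y)) \<ge> 0"
          by blast+
        show ?thesis unfolding k vec_facts(1)[of "x-y" \<eta> "T1 x - T1 y" "T2 (S x) - T2 (S y)"] vec_facts(2)[of \<eta> "T1 x - T1 y" "T2 (S x) - T2 (S y)" \<sigma>3 "T3 (T1 x) - T3 (T1 y)"] vec_facts(3)[of "2 * \<nu> * \<sigma>1 - lam" "T1 x - T1 y" "2 * \<sigma>2 - lam" "T2 (S x) - T2 (S y)"] vec_facts(4)[of \<eta> "T1 x - T1 y" "T2 (S x) - T2 (S y)"] nsq[of "x-y"]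
          by (rule real_i[OF pos(1) pos(2) s1p _ _ es_def ks(1) _ ks(3) pos(4)])
             (use h ks(2) in \<open>simp_all add: inner_commute[of "T2 (S x) - T2 (S y)" "T3 (T1 x) - T3 (T1 y)"]\<close>)
      qed
      show "(\<forall>x y. (norm (T x - T y))\<^sup>2 \<le> (norm (x - y))\<^sup>2
          - ((1 / \<nu>) * (lam - \<delta> / (2 * \<sigma>3)) / \<eta> - 1) * (norm ((x - T x) - (y - T y)))\<^sup>2
          - \<delta> / (2 * \<eta> * \<nu> * \<sigma>3) *
              (norm ((x - T x) - (y - T y) - (2 * \<eta> * \<sigma>3) *\<^sub>R (T3 (T1 x) - T3 (T1 y))))\<^sup>2)
       \<and> conically_averaged (\<eta> / ((1 / \<nu>) * (lam - \<delta> / (2 * \<sigma>3)))) T"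
      proof (rule conjI[rotated])
        show "conically_averaged (\<eta> / ((1 / \<nu>) * (lam - \<delta> / (2 * \<sigma>3)))) T"
          unfolding es_def[symmetric]
          by (rule conic1[where R = "\<lambda>x y. \<delta> / (2 * \<eta> * \<nu> * \<sigma>3) *
              (norm ((x - T x) - (y - T y) - (2 * \<eta> * \<sigma>3) *\<^sub>R (T3 (T1 x) - T3 (T1 y))))\<^sup>2", OF pos(1) es0 I])
             (use pos s1p in \<open>intro mult_nonneg_nonneg divide_nonneg_nonneg; simp\<close>)
      qed (use I in \<open>unfold es_def, blast\<close>)
    qed
  next
    show "let \<eta>s = (1 / \<nu>) * ((2 * \<nu> * \<sigma>1 - lam) * (2 * \<sigma>2 - lam) / (2 * (\<nu> * \<sigma>1 + \<sigma>2 - lam))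
                + lam - \<delta> / (2 * \<sigma>3)) in
      (lam < \<nu> * \<sigma>1 + \<sigma>2 \<and> \<eta>s > 0) \<longrightarrow>
      ((\<forall>x y. (norm (T x - T y))\<^sup>2 \<le> (norm (x - y))\<^sup>2
          - (\<eta>s / \<eta> - 1) * (norm ((x - T x) - (y - T y)))\<^sup>2
          - \<delta> / (2 * \<eta> * \<nu> * \<sigma>3) *
              (norm ((x - T x) - (y - T y) - (2 * \<eta> * \<sigma>3) *\<^sub>R (T3 (T1 x) - T3 (T1 y))))\<^sup>2
          - \<eta> / (2 * \<nu> * (\<nu> * \<sigma>1 + \<sigma>2 - lam)) *
              (norm ((2 * \<nu> * \<sigma>1 - lam) *\<^sub>R (T1 x - T1 y) + (2 * \<sigma>2 - lam) *\<^sub>R (T2 (S x) - T2 (S y))))\<^sup>2)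
       \<and> conically_averaged (\<eta> / \<eta>s) T)"
      unfolding Let_def
    proof (intro impI)
      define es where "es = (1 / \<nu>) * ((2 * \<nu> * \<sigma>1 - lam) * (2 * \<sigma>2 - lam) / (2 * (\<nu> * \<sigma>1 + \<sigma>2 - lam))
                + lam - \<delta> / (2 * \<sigma>3))"
      assume h: "lam < \<nu> * \<sigma>1 + \<sigma>2 \<and> (1 / \<nu>) * ((2 * \<nu> * \<sigma>1 - lam) * (2 * \<sigma>2 - lam) / (2 * (\<nu> * \<sigma>1 + \<sigma>2 - lam))
                + lam - \<delta> / (2 * \<sigma>3)) > 0"
      have es0: "es > 0" using h unfolding es_def by blast
      have kp: "\<nu> * \<sigma>1 + \<sigma>2 - lam > 0" using h by simp
      have I: "(norm (T x - T y))\<^sup>2 \<le> (norm (x - y))\<^sup>2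
          - (es / \<eta> - 1) * (norm ((x - T x) - (y - T y)))\<^sup>2
          - \<delta> / (2 * \<eta> * \<nu> * \<sigma>3) *
              (norm ((x - T x) - (y - T y) - (2 * \<eta> * \<sigma>3) *\<^sub>R (T3 (T1 x) - T3 (T1 y))))\<^sup>2
          - \<eta> / (2 * \<nu> * (\<nu> * \<sigma>1 + \<sigma>2 - lam)) *
              (norm ((2 * \<nu> * \<sigma>1 - lam) *\<^sub>R (T1 x - T1 y) + (2 * \<sigma>2 - lam) *\<^sub>R (T2 (S x) - T2 (S y))))\<^sup>2" for x y
      proof -
        from key[of x y] have k: "(x - T x) - (y - T y) = \<eta> *\<^sub>R (T1 x - T1 y - (T2 (S x) - T2 (S y)))"
          "T x - T y = (x - y) - \<eta> *\<^sub>R (T1 x - T1 y - (T2 (S x) - T2 (S y)))" and ks: "inner (x-y) (T1 x - T1 y) - \<sigma>1 * inner (T1 x - T1 y) (T1 x - T1 y) \<ge> 0"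
     "-\<nu> * inner (x-y) (T2 (S x) - T2 (S y)) + lam * inner (T1 x - T1 y) (T2 (S x) - T2 (S y))
        - \<delta> * inner (T2 (S x) - T2 (S y)) (T3 (T1 x) - T3 (T1 y)) - \<sigma>2 * inner (T2 (S x) - T2 (S y)) (T2 (S x) - T2 (S y)) \<ge> 0"
     "inner (T1 x - T1 y) (T3 (T1 x) - T3 (T1 y)) - \<sigma>3 * inner (T3 (T1 x) - T3 (T1 y)) (T3 (T1 x) - T3 (T1 y)) \<ge> 0"
          by blast+
        show ?thesis unfolding k vec_facts(1)[of "x-y" \<eta> "T1 x - T1 y" "T2 (S x) - T2 (S y)"] vec_facts(2)[of \<eta> "T1 x - T1 y" "T2 (S x) - T2 (S y)" \<sigma>3 "T3 (T1 x) - T3 (T1 y)"] vec_facts(3)[of "2 * \<nu> * \<sigma>1 - lam" "T1 x - T1 y" "2 * \<sigma>2 - lam" "T2 (S x) - T2 (S y)"] vec_facts(4)[of \<eta> "T1 x - T1 y" "T2 (S x) - T2 (S y)"] nsq[of "x-y"]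
          by (rule real_ii[OF pos(1) pos(2) s1p kp es_def ks(1) _ ks(3) pos(4)])
             (use ks(2) in \<open>simp add: inner_commute[of "T2 (S x) - T2 (S y)" "T3 (T1 x) - T3 (T1 y)"]\<close>)
      qed
      show "(\<forall>x y. (norm (T x - T y))\<^sup>2 \<le> (norm (x - y))\<^sup>2
          - (es / \<eta> - 1) * (norm ((x - T x) - (y - T y)))\<^sup>2
          - \<delta> / (2 * \<eta> * \<nu> * \<sigma>3) *
              (norm ((x - T x) - (y - T y) - (2 * \<eta> * \<sigma>3) *\<^sub>R (T3 (T1 x) - T3 (T1 y))))\<^sup>2
          - \<eta> / (2 * \<nu> * (\<nu> * \<sigma>1 + \<sigma>2 - lam)) *
              (norm ((2 * \<nu> * \<sigma>1 - lam) *\<^sub>R (T1 x - T1 y) + (2 * \<sigma>2 - lam) *\<^sub>R (T2 (S x) - T2 (S y))))\<^sup>2)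
       \<and> conically_averaged (\<eta> / es) T"
      proof (rule conjI[rotated])
        show "conically_averaged (\<eta> / es) T"
          by (rule conic2[where Ra = "\<lambda>x y. \<delta> / (2 * \<eta> * \<nu> * \<sigma>3) *
              (norm ((x - T x) - (y - T y) - (2 * \<eta> * \<sigma>3) *\<^sub>R (T3 (T1 x) - T3 (T1 y))))\<^sup>2"
           and Rb = "\<lambda>x y. \<eta> / (2 * \<nu> * (\<nu> * \<sigma>1 + \<sigma>2 - lam)) *
              (norm ((2 * \<nu> * \<sigma>1 - lam) *\<^sub>R (T1 x - T1 y) + (2 * \<sigma>2 - lam) *\<^sub>R (T2 (S x) - T2 (S y))))\<^sup>2", OF pos(1) es0 I])
             (use pos s1p kp in \<open>intro mult_nonneg_nonneg divide_nonneg_nonneg; simp\<close>)+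
      qed (use I in blast)
    qed
  qed
qed

end
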